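(* Let $\Lambda=[\mu_1,L_1]\cup[\mu_2,L_2]$ with $0<\mu_1<L_1<\mu_2<L_2$. There exists a real polynomial $\sigma$ of degree $2$ with $\sigma(\Lambda)\subseteq[-1,1]$ such that, for every $n\ge1$, $T_n\circ\sigma$ is the solution of $\max\{p(0):p\in\mathbb{R}_{2n}[X],\ \sup_{\lambda\in\Lambda}|p(\lambda)|\le1\}$, if and only if $L_1-\mu_1=L_2-\mu_2$.
   Context: $\mathbb{R}_N[X]$ is the set of real polynomials of degree at most $N$. $T_n$ is the Chebyshev polynomial of the first kind of degree $n$. *)

theory Defs
  imports "HOL-Computational_Algebra.Polynomial"
begin

fun cheb_T :: "nat \<Rightarrow> real poly" where
  "cheb_T 0 = 1"
| "cheb_T (Suc 0) = [:0, 1:]"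
| "cheb_T (Suc (Suc n)) = smult 2 [:0, 1:] * cheb_T (Suc n) - cheb_T n"

definition feasible :: "real set \<Rightarrow> nat \<Rightarrow> real poly \<Rightarrow> bool" where
  "feasible S N p \<longleftrightarrow> degree p \<le> N \<and> (\<forall>x\<in>S. \<bar>poly p x\<bar> \<le> 1)"

definition solves_max :: "real set \<Rightarrow> nat \<Rightarrow> real poly \<Rightarrow> bool" where
  "solves_max S N p \<longleftrightarrow> feasible S N p \<and> (\<forall>q. feasible S N q \<longrightarrow> poly q 0 \<le> poly p 0)"

end

theory Submission
  imports Defs "HOL-Analysis.Analysis"
begin

lemma cheb_cos: "poly (cheb_T n) (cos t) = cos (real n * t)"
proof (induction n rule: cheb_T.induct)
  case 1 then show ?case by simp
next
  case 2 then show ?case by simp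
next
  case (3 n)
  have e: "cos (real (Suc (Suc n)) * t) = 2 * cos t * cos (real (Suc n) * t) - cos (real n * t)"
  proof -
    have "cos (real (Suc n) * t + t) + cos (real (Suc n) * t - t) = 2 * cos t * cos (real (Suc n) * t)"
      by (simp add: cos_add cos_diff)
    moreover have "real (Suc n) * t + t = real (Suc (Suc n)) * t" "real (Suc n) * t - t = real n * t"
      by (simp_all add: algebra_simps)
    ultimately show ?thesis by simp
  qed
  show ?case using 3 e by (simp add: algebra_simps)
qed

lemma cheb_deg: "degree (cheb_T n) \<le> n"
proof (induction n rule: cheb_T.induct)
  case 1 then show ?case by simp
next
  case 2 then show ?case by simp
next
  case (3 n)
  have "degree (smult 2 [:0, 1:] * cheb_T (Suc n)) \<le> Suc (Suc n)"
    using 3 degree_mult_le[of "smult 2 [:0, 1:]" "cheb_T (Suc n)"] by simp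
  moreover have "degree (cheb_T n) \<le> Suc (Suc n)" using 3 by simp
  ultimately show ?case by (simp add: degree_diff_le)
qed

lemma cheb_bound: assumes "-1 \<le> y" "y \<le> 1" shows "\<bar>poly (cheb_T n) y\<bar> \<le> 1"
proof -
  have "poly (cheb_T n) y = cos (real n * arccos y)" using cheb_cos[of n "arccos y"] assms by simp
  then show ?thesis by simp
qed

lemma cheb1: "pcompose (cheb_T 1) p = p" by (simp add: pcompose_pCons)

lemma feasible_one: "feasible S N 1" by (simp add: feasible_def)

lemma nonopt:
  fixes S :: "real set" and m :: real
  assumes sol: "solves_max S N p" and pd: "p = d * s"
    and dpos: "\<forall>x\<in>S. poly d x > 0" and d0: "poly d 0 > 0" and dd: "degree d \<ge> 1"
    and cS: "compact S" and ne: "S \<noteq> {}" and Sm: "S \<subseteq> {m..}" and m: "m > 0"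
  shows False
proof -
  have p01: "poly p 0 \<ge> 1" using sol feasible_one[of S N] unfolding solves_max_def by force
  hence "p \<noteq> 0" by auto
  hence s0: "s \<noteq> 0" "d \<noteq> 0" using pd by auto
  have "degree p \<le> N" using sol unfolding solves_max_def feasible_def by auto
  moreover have "degree p = degree d + degree s" using pd s0 degree_mult_eq by blast
  ultimately have degs: "degree s + 1 \<le> N" using dd by linarith
  have "poly s 0 * poly d 0 \<ge> 1" using p01 pd by (simp add: mult.commute)
  hence sp: "poly s 0 > 0" using d0 by (metis mult_nonpos_nonneg less_le not_le order.trans zero_less_one zero_le_one)
  have cd: "continuous_on S (\<lambda>x. poly d x)" by (intro continuous_intros)
  obtain x0 where x0: "x0 \<in> S" "\<forall>y\<in>S. poly d x0 \<le> poly d y"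
    using continuous_attains_inf[OF cS ne cd] by auto
  define \<delta> where "\<delta> = poly d x0"
  have dl: "\<delta> > 0" using dpos x0 \<delta>_def by auto
  have ca: "continuous_on S (\<lambda>x::real. \<bar>x\<bar>)" by (intro continuous_intros)
  obtain x1 where x1: "x1 \<in> S" "\<forall>y\<in>S. \<bar>y\<bar> \<le> \<bar>x1\<bar>"
    using continuous_attains_sup[OF cS ne ca] by auto
  define B where "B = \<bar>x1\<bar>"
  have B: "\<forall>x\<in>S. \<bar>x\<bar> \<le> B" using x1 B_def by auto
  have B0: "B \<ge> 0" using B ne by force
  define \<epsilon> where "\<epsilon> = \<delta> / (B + \<bar>m\<bar> + 1)"
  have ep: "\<epsilon> > 0" using dl B0 \<epsilon>_def by simp
  define g where "g = [:-m, 1:]"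
  define q where "q = s * (d - smult \<epsilon> g)"
  have gd: "degree g = 1" unfolding g_def by simp
  have "degree q \<le> degree s + degree (d - smult \<epsilon> g)" unfolding q_def by (rule degree_mult_le)
  also have "degree (d - smult \<epsilon> g) \<le> max (degree d) (degree (smult \<epsilon> g))" by (rule degree_diff_le_max)
  finally have "degree q \<le> N" using degs dd gd \<open>degree p \<le> N\<close> \<open>degree p = degree d + degree s\<close> by simp
  moreover have "\<forall>x\<in>S. \<bar>poly q x\<bar> \<le> 1"
  proof
    fix x assume x: "x \<in> S"
    have xm: "x \<ge> m" using Sm x by auto
    have "\<epsilon> * (x - m) \<le> \<epsilon> * (B + \<bar>m\<bar> + 1)" using B x ep by (intro mult_left_mono) auto
    also have "\<dots> = \<delta>" using B0 unfolding \<epsilon>_def by simp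
    also have "\<delta> \<le> poly d x" using x0 x \<delta>_def by auto
    finally have a: "\<epsilon> * (x - m) \<le> poly d x" .
    have b: "0 \<le> \<epsilon> * (x - m)" using xm ep by simp
    have "\<bar>poly q x\<bar> = \<bar>poly s x\<bar> * \<bar>poly d x - \<epsilon> * (x - m)\<bar>"
      proof -
      have "poly q x = poly s x * (poly d x - \<epsilon> * (x - m))" unfolding q_def g_def by (simp add: algebra_simps)
      then show ?thesis by (simp add: abs_mult)
    qed
    also have "\<dots> \<le> \<bar>poly s x\<bar> * \<bar>poly d x\<bar>" using a b by (intro mult_left_mono) auto
    also have "\<dots> = \<bar>poly p x\<bar>" using pd by (simp add: abs_mult)
    also have "\<dots> \<le> 1" using sol x unfolding solves_max_def feasible_def by auto
    finally show "\<bar>poly q x\<bar> \<le> 1" .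
  qed
  ultimately have "feasible S N q" unfolding feasible_def by auto
  hence "poly q 0 \<le> poly p 0" using sol unfolding solves_max_def by auto
  moreover have "poly q 0 = poly p 0 + \<epsilon> * m * poly s 0" unfolding q_def g_def pd by (simp add: algebra_simps)
  moreover have "\<epsilon> * m * poly s 0 > 0" using ep m sp by simp
  ultimately show False by linarith
qed

lemma cheb_zero:
  fixes k n :: nat
  assumes "n \<ge> 1"
  shows "poly (cheb_T n) (cos ((2 * real k + 1) * pi / (2 * real n))) = 0"
proof -
  have nz: "real n \<noteq> 0" using assms by simp
  have "real n * ((2 * real k + 1) * pi / (2 * real n)) = of_int (int (2*k+1)) * (pi/2)"
    using nz by (simp add: field_simps)
  moreover have "cos (of_int (int (2*k+1)) * (pi/2)) = 0"
    by (subst cos_zero_iff_int) (auto intro!: exI[of _ "int (2*k+1)"])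
  ultimately have "cos (real n * ((2 * real k + 1) * pi / (2 * real n))) = 0" using assms by (simp add: algebra_simps)
  thus ?thesis by (simp only: cheb_cos)
qed

lemma dens:
  fixes \<alpha> \<beta> :: real
  assumes "-1 \<le> \<alpha>" "\<alpha> < \<beta>" "\<beta> \<le> 1"
  shows "\<exists>n\<ge>1. \<exists>y1 y2. \<alpha> < y1 \<and> y1 < \<beta> \<and> \<alpha> < y2 \<and> y2 < \<beta> \<and> y1 \<noteq> y2
           \<and> poly (cheb_T n) y1 = 0 \<and> poly (cheb_T n) y2 = 0"
proof -
  define a where "a = arccos \<beta>"
  define b where "b = arccos \<alpha>"
  have ab: "a < b" unfolding a_def b_def using assms by (intro arccos_less_arccos) auto
  have a0: "0 \<le> a" unfolding a_def using assms by (intro arccos_lbound) auto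
  have bpi: "b \<le> pi" unfolding b_def using assms by (intro arccos_ubound) auto
  obtain n :: nat where n: "5 * pi / (b - a) < real n" using reals_Archimedean2 by blast
  have "5 * pi / (b - a) > 0" using ab by simp
  hence npos: "real n > 0" using n by linarith
  hence n1: "n \<ge> 1" by simp
  have nba: "5 * pi < (b - a) * real n" using n ab by (simp add: field_simps)
  define k where "k = nat \<lfloor>a * real n / pi\<rfloor>"
  have an0: "a * real n / pi \<ge> 0" using a0 npos by simp
  have k1: "real k \<le> a * real n / pi" unfolding k_def using an0 by linarith
  have k2: "a * real n / pi < real k + 1" unfolding k_def using an0 by linarith
  have k1': "real k * pi \<le> a * real n" using k1 by (simp add: field_simps)
  have k2': "a * real n < (real k + 1) * pi" using k2 by (simp add: field_simps)
  define t1 where "t1 = (2 * real (k+1) + 1) * pi / (2 * real n)"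
  define t2 where "t2 = (2 * real (k+2) + 1) * pi / (2 * real n)"
  have t1a: "a < t1"
  proof -
    have "(real k + 1) * pi < (2 * real (k+1) + 1) * pi / 2" using pi_gt_zero by (simp add: algebra_simps)
    hence "a * real n < (2 * real (k+1) + 1) * pi / 2" using k2' by linarith
    thus ?thesis unfolding t1_def using npos by (simp add: field_simps)
  qed
  have t12: "t1 < t2" unfolding t1_def t2_def using npos by (simp add: divide_strict_right_mono)
  have t2b: "t2 < b"
  proof -
    have "(2 * real (k+2) + 1) * pi / 2 = real k * pi + 5 * pi / 2" by (simp add: algebra_simps)
    also have "\<dots> < b * real n"
    proof -
      have e1: "5*pi/2 < 5*pi" using pi_gt_zero by simp
      have e2: "(b - a) * real n = b*real n - a*real n" by (simp add: algebra_simps)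
      show ?thesis using k1' nba e1 e2 by linarith
    qed
    finally show ?thesis unfolding t2_def using npos by (simp add: field_simps)
  qed
  define y1 where "y1 = cos t1"
  define y2 where "y2 = cos t2"
  have "cos b < y2" unfolding y2_def using t2b bpi t1a t12 a0 by (intro cos_monotone_0_pi) auto
  moreover have "y2 < y1" unfolding y1_def y2_def using t2b bpi t1a t12 a0 by (intro cos_monotone_0_pi) auto
  moreover have "y1 < cos a" unfolding y1_def using t2b bpi t1a t12 a0 by (intro cos_monotone_0_pi) auto
  moreover have "cos a = \<beta>" "cos b = \<alpha>" unfolding a_def b_def using assms by auto
  ultimately have *: "\<alpha> < y1 \<and> y1 < \<beta> \<and> \<alpha> < y2 \<and> y2 < \<beta> \<and> y1 \<noteq> y2" by auto
  have "poly (cheb_T n) y1 = 0" unfolding y1_def t1_def using cheb_zero[OF n1] by blast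
  moreover have "poly (cheb_T n) y2 = 0" unfolding y2_def t2_def using cheb_zero[OF n1] by blast
  ultimately show ?thesis using n1 * by blast
qed

lemma ivt_val:
  fixes \<sigma> :: "real poly"
  assumes "u < v" "(poly \<sigma> u < y \<and> y < poly \<sigma> v) \<or> (poly \<sigma> v < y \<and> y < poly \<sigma> u)"
  shows "\<exists>x. u < x \<and> x < v \<and> poly \<sigma> x = y"
proof -
  have pe: "\<And>x. poly (\<sigma> - [:y:]) x = poly \<sigma> x - y" by simp
  from assms(2) show ?thesis
  proof
    assume h: "poly \<sigma> u < y \<and> y < poly \<sigma> v"
    have "\<exists>x. u < x \<and> x < v \<and> poly (\<sigma> - [:y:]) x = 0"
      using h by (intro poly_IVT_pos[OF assms(1)]) (simp_all only: pe, auto)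
    thus ?thesis by (simp only: pe) auto
  next
    assume h: "poly \<sigma> v < y \<and> y < poly \<sigma> u"
    have "\<exists>x. u < x \<and> x < v \<and> poly (\<sigma> - [:y:]) x = 0"
      using h by (intro poly_IVT_neg[OF assms(1)]) (simp_all only: pe, auto)
    thus ?thesis by (simp only: pe) auto
  qed
qed

lemma gap_contra:
  fixes \<sigma> :: "real poly" and S :: "real set"
  assumes opt: "\<forall>n\<ge>1. solves_max S (2*n) (pcompose (cheb_T n) \<sigma>)"
    and cS: "compact S" and ne: "S \<noteq> {}" and Sm: "S \<subseteq> {m..}" and m: "m > 0"
    and uv: "u < v" and Ssep: "\<forall>z\<in>S. z \<le> u \<or> v \<le> z" and u0: "0 \<le> u"
    and ab: "-1 \<le> \<alpha>" "\<alpha> < \<beta>" "\<beta> \<le> 1"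
    and btw: "\<forall>y. \<alpha> < y \<and> y < \<beta> \<longrightarrow> (poly \<sigma> u < y \<and> y < poly \<sigma> v) \<or> (poly \<sigma> v < y \<and> y < poly \<sigma> u)"
  shows False
proof -
  obtain n y1 y2 where n: "n \<ge> 1" and y: "\<alpha> < y1" "y1 < \<beta>" "\<alpha> < y2" "y2 < \<beta>" "y1 \<noteq> y2"
    and r: "poly (cheb_T n) y1 = 0" "poly (cheb_T n) y2 = 0"
    using dens[OF ab] by blast
  obtain x1 where x1: "u < x1" "x1 < v" "poly \<sigma> x1 = y1" using ivt_val[OF uv] btw y by blast
  obtain x2 where x2: "u < x2" "x2 < v" "poly \<sigma> x2 = y2" using ivt_val[OF uv] btw y by blast
  obtain T1 where T1: "cheb_T n = [:-y1,1:] * T1" using r(1) by (auto simp: poly_eq_0_iff_dvd dvd_def)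
  have "poly T1 y2 = 0" using r(2) y(5) by (simp add: T1)
  then obtain T2 where T2: "T1 = [:-y2,1:] * T2" by (auto simp: poly_eq_0_iff_dvd dvd_def)
  have "poly (pcompose [:-y1,1:] \<sigma>) x1 = 0" using x1 by (simp add: poly_pcompose)
  then obtain A1 where A1: "pcompose [:-y1,1:] \<sigma> = [:-x1,1:] * A1" by (auto simp: poly_eq_0_iff_dvd dvd_def)
  have "poly (pcompose [:-y2,1:] \<sigma>) x2 = 0" using x2 by (simp add: poly_pcompose)
  then obtain A2 where A2: "pcompose [:-y2,1:] \<sigma> = [:-x2,1:] * A2" by (auto simp: poly_eq_0_iff_dvd dvd_def)
  define d where "d = [:-x1,1:] * [:-x2,1:]"
  have pd: "pcompose (cheb_T n) \<sigma> = d * (A1 * A2 * pcompose T2 \<sigma>)"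
    unfolding T1 T2 pcompose_mult A1 A2 d_def by (simp only: ac_simps)
  have dv: "\<And>x. poly d x = (x - x1) * (x - x2)" unfolding d_def by (simp add: algebra_simps)
  have dd: "degree d \<ge> 1" unfolding d_def by (simp add: degree_mult_eq)
  have dpos: "\<forall>x\<in>S. poly d x > 0"
  proof
    fix z assume "z \<in> S"
    then have "z \<le> u \<or> v \<le> z" using Ssep by auto
    then show "poly d z > 0"
    proof
      assume "z \<le> u" then have "z - x1 < 0" "z - x2 < 0" using x1 x2 by auto
      then show ?thesis by (simp add: dv mult_neg_neg)
    next
      assume "v \<le> z" then have "z - x1 > 0" "z - x2 > 0" using x1 x2 by auto
      then show ?thesis by (simp add: dv)
    qed
  qed
  have d0: "poly d 0 > 0" using u0 x1 x2 by (simp add: dv)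
  show False using nonopt[OF _ pd dpos d0 dd cS ne Sm m] opt n by blast
qed

lemma forward:
  fixes \<mu>1 L1 \<mu>2 L2 :: real and \<sigma> :: "real poly"
  assumes o: "0 < \<mu>1" "\<mu>1 < L1" "L1 < \<mu>2" "\<mu>2 < L2"
    and deg: "degree \<sigma> = 2"
    and img: "poly \<sigma> ` ({\<mu>1..L1} \<union> {\<mu>2..L2}) \<subseteq> {-1..1}"
    and opt: "\<forall>n\<ge>1. solves_max ({\<mu>1..L1} \<union> {\<mu>2..L2}) (2 * n) (pcompose (cheb_T n) \<sigma>)"
  shows "L1 - \<mu>1 = L2 - \<mu>2"
proof (rule ccontr)
  assume neq: "L1 - \<mu>1 \<noteq> L2 - \<mu>2"
  define S where "S = {\<mu>1..L1} \<union> {\<mu>2..L2}"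
  have cS: "compact S" unfolding S_def by (intro compact_Un compact_Icc)
  have ne: "S \<noteq> {}" unfolding S_def using o by auto
  have Sm: "S \<subseteq> {\<mu>1..}" unfolding S_def using o by auto
  have opt': "\<forall>n\<ge>1. solves_max S (2 * n) (pcompose (cheb_T n) \<sigma>)" using opt S_def by simp
  have fv: "\<And>x. x \<in> S \<Longrightarrow> -1 \<le> poly \<sigma> x \<and> poly \<sigma> x \<le> 1"
  proof -
    fix x assume "x \<in> S"
    hence "poly \<sigma> x \<in> {-1..1}" using img S_def by blast
    thus "-1 \<le> poly \<sigma> x \<and> poly \<sigma> x \<le> 1" by simp
  qed
  have mem: "\<mu>1 \<in> S" "L1 \<in> S" "\<mu>2 \<in> S" "L2 \<in> S" unfolding S_def using o by auto
  define a0 where "a0 = coeff \<sigma> 0"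
  define a1 where "a1 = coeff \<sigma> 1"
  define a2 where "a2 = coeff \<sigma> 2"
  have pv: "\<And>x. poly \<sigma> x = a0 + a1 * x + a2 * x^2"
    unfolding a0_def a1_def a2_def by (simp add: poly_altdef deg numeral_2_eq_2)
  have "\<sigma> \<noteq> 0" using deg by auto
  hence a2nz: "a2 \<noteq> 0" unfolding a2_def using deg by (metis leading_coeff_0_iff)
  have sd: "\<And>x y. poly \<sigma> x - poly \<sigma> y = (x - y) * (a1 + a2 * (x + y))"
    by (simp add: pv power2_eq_square algebra_simps)
  have A: "poly \<sigma> L1 = poly \<sigma> \<mu>2"
  proof (rule ccontr)
    assume h: "poly \<sigma> L1 \<noteq> poly \<sigma> \<mu>2"
    have s0: "L1 < \<mu>2" using o by simp
    have s1: "\<forall>z\<in>S. z \<le> L1 \<or> \<mu>2 \<le> z" unfolding S_def by auto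
    have s2: "0 \<le> L1" using o by simp
    have s3: "-1 \<le> min (poly \<sigma> L1) (poly \<sigma> \<mu>2)" using fv[OF mem(2)] fv[OF mem(3)] by simp
    have s4: "min (poly \<sigma> L1) (poly \<sigma> \<mu>2) < max (poly \<sigma> L1) (poly \<sigma> \<mu>2)" using h by simp
    have s5: "max (poly \<sigma> L1) (poly \<sigma> \<mu>2) \<le> 1" using fv[OF mem(2)] fv[OF mem(3)] by simp
    have s6: "\<forall>y. min (poly \<sigma> L1) (poly \<sigma> \<mu>2) < y \<and> y < max (poly \<sigma> L1) (poly \<sigma> \<mu>2) \<longrightarrow> (poly \<sigma> L1 < y \<and> y < poly \<sigma> \<mu>2) \<or> (poly \<sigma> \<mu>2 < y \<and> y < poly \<sigma> L1)" by auto
    show False by (rule gap_contra[OF opt' cS ne Sm o(1) s0 s1 s2 s3 s4 s5 s6])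
  qed
  define c where "c = (L1 + \<mu>2) / 2"
  have "(L1 - \<mu>2) * (a1 + a2 * (L1 + \<mu>2)) = 0" using A sd[of L1 \<mu>2] by simp
  hence a1e: "a1 = - a2 * (L1 + \<mu>2)" using o by simp
  have sd2: "\<And>x y. poly \<sigma> x - poly \<sigma> y = a2 * ((x - y) * (x + y - 2 * c))"
    unfolding pv c_def a1e by (simp add: power2_eq_square field_simps)
  have sol1: "solves_max S 2 \<sigma>" using opt'[rule_format, of 1] by (simp add: pcompose_pCons)
  have a2p: "a2 > 0"
  proof (rule ccontr)
    assume "\<not> a2 > 0" hence a2n: "a2 < 0" using a2nz by simp
    have "(0 - \<mu>1) * (0 + \<mu>1 - 2 * c) > 0" using o unfolding c_def by (intro mult_neg_neg) auto
    hence "poly \<sigma> 0 - poly \<sigma> \<mu>1 < 0" unfolding sd2 using a2n by (simp add: mult_neg_neg)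
    moreover have "poly \<sigma> 0 \<ge> 1" using sol1 feasible_one unfolding solves_max_def by force
    ultimately show False using fv[OF mem(1)] by linarith
  qed
  show False
  proof (cases "L1 - \<mu>1 > L2 - \<mu>2")
    case True
    define v where "v = 2 * c - \<mu>1"
    have Lv: "L2 < v" using True unfolding v_def c_def by (simp add: field_simps)
    have e1: "poly \<sigma> v = poly \<sigma> \<mu>1" using sd2[of v \<mu>1] unfolding v_def by simp
    have "(v - L2) * (v + L2 - 2 * c) > 0" using Lv o unfolding v_def by (intro mult_pos_pos) auto
    hence "a2 * ((v - L2) * (v + L2 - 2 * c)) > 0" using a2p by simp
    hence lt: "poly \<sigma> L2 < poly \<sigma> v" using sd2[of v L2] by linarith
    have s1: "\<forall>z\<in>S. z \<le> L2 \<or> v \<le> z" unfolding S_def using o by auto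
    have s2: "0 \<le> L2" using o by simp
    have s3: "-1 \<le> poly \<sigma> L2" using fv[OF mem(4)] by simp
    have s4: "poly \<sigma> v \<le> 1" using fv[OF mem(1)] e1 by simp
    have s5: "\<forall>y. poly \<sigma> L2 < y \<and> y < poly \<sigma> v \<longrightarrow> (poly \<sigma> L2 < y \<and> y < poly \<sigma> v) \<or> (poly \<sigma> v < y \<and> y < poly \<sigma> L2)" by blast
    show False by (rule gap_contra[OF opt' cS ne Sm o(1) Lv s1 s2 s3 lt s4 s5])
  next
    case False
    hence lt1: "L1 - \<mu>1 < L2 - \<mu>2" using neq by simp
    have "(0 - \<mu>1) * (0 + \<mu>1 - 2 * c) > 0" using o unfolding c_def by (intro mult_neg_neg) auto
    hence "a2 * ((0 - \<mu>1) * (0 + \<mu>1 - 2 * c)) > 0" using a2p by (simp add: mult_pos_neg)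
    hence g0: "poly \<sigma> \<mu>1 < poly \<sigma> 0" using sd2[of 0 \<mu>1] by linarith
    have "(L2 - \<mu>1) * (L2 + \<mu>1 - 2 * c) > 0" using o lt1 unfolding c_def by (intro mult_pos_pos) auto
    hence "a2 * ((L2 - \<mu>1) * (L2 + \<mu>1 - 2 * c)) > 0" using a2p by simp
    hence g1: "poly \<sigma> \<mu>1 < poly \<sigma> L2" using sd2[of L2 \<mu>1] by linarith
    have s0: "(0::real) < \<mu>1" using o by simp
    have s1: "\<forall>z\<in>S. z \<le> 0 \<or> \<mu>1 \<le> z" unfolding S_def using o by auto
    have s2: "(0::real) \<le> 0" by simp
    have s3: "-1 \<le> poly \<sigma> \<mu>1" using fv[OF mem(1)] by simp
    have s4: "poly \<sigma> \<mu>1 < min 1 (poly \<sigma> 0)" using g0 g1 fv[OF mem(4)] by simp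
    have s5: "min 1 (poly \<sigma> 0) \<le> 1" by simp
    have s6: "\<forall>y. poly \<sigma> \<mu>1 < y \<and> y < min 1 (poly \<sigma> 0) \<longrightarrow> (poly \<sigma> 0 < y \<and> y < poly \<sigma> \<mu>1) \<or> (poly \<sigma> \<mu>1 < y \<and> y < poly \<sigma> 0)" by auto
    show False by (rule gap_contra[OF opt' cS ne Sm o(1) s0 s1 s2 s3 s4 s5 s6])
  qed
qed

lemma lagrange0:
  fixes x :: "nat \<Rightarrow> real" and M :: nat and q :: "real poly"
  assumes inj: "inj_on x {0..M}" and dq: "degree q \<le> M"
  shows "poly q 0 = (\<Sum>i=0..M. poly q (x i) * (\<Prod>j\<in>{0..M}-{i}. (0 - x j) / (x i - x j)))"
proof -
  define l where "l i = (\<Prod>j\<in>{0..M}-{i}. [:- x j / (x i - x j), 1 / (x i - x j):])" for i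
  define L where "L = (\<Sum>i=0..M. smult (poly q (x i)) (l i))"
  have pl: "poly (l i) z = (\<Prod>j\<in>{0..M}-{i}. (z - x j) / (x i - x j))" for i z
    unfolding l_def poly_prod by (intro prod.cong) (auto simp: diff_divide_distrib)
  have dl: "degree (l i) \<le> M" if i: "i \<le> M" for i
  proof -
    have "degree (l i) \<le> sum (degree \<circ> (\<lambda>j. [:- x j / (x i - x j), 1 / (x i - x j):])) ({0..M}-{i})"
      unfolding l_def by (rule degree_prod_sum_le) simp
    also have "\<dots> \<le> sum (\<lambda>j. 1) ({0..M}-{i})" by (intro sum_mono) auto
    also have "\<dots> \<le> M" using i by (auto simp: card_Diff_singleton)
    finally show ?thesis .
  qed
  have dL: "degree L \<le> M" unfolding L_def
    by (intro degree_sum_le) (use dl in \<open>auto intro: order.trans[OF degree_smult_le]\<close>)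
  have lk: "poly (l i) (x k) = (if k = i then 1 else 0)" if "i \<in> {0..M}" "k \<in> {0..M}" for i k
  proof (cases "k = i")
    case True
    have "\<forall>j\<in>{0..M}-{i}. x i - x j \<noteq> 0" using inj that unfolding inj_on_def by auto
    then show ?thesis using True by (simp add: pl)
  next
    case False
    have "(\<Prod>j\<in>{0..M}-{i}. (x k - x j) / (x i - x j)) = 0"
      using False that by (intro prod_zero) (auto intro!: bexI[of _ k])
    then show ?thesis using False by (simp add: pl)
  qed
  have "poly L (x k) = poly q (x k)" if k: "k \<in> {0..M}" for k
  proof -
    have "poly L (x k) = (\<Sum>i=0..M. poly q (x i) * poly (l i) (x k))" unfolding L_def by (simp add: poly_sum)
    also have "\<dots> = (\<Sum>i=0..M. if i = k then poly q (x k) else 0)"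
      by (intro sum.cong) (use k lk in auto)
    also have "\<dots> = poly q (x k)" using k by simp
    finally show ?thesis .
  qed
  hence "L = q"
  proof (intro poly_eqI_degree[of "x ` {0..M}"])
    show "card (x ` {0..M}) > degree L" "card (x ` {0..M}) > degree q"
      using dL dq card_image[OF inj] by auto
  qed auto
  hence "poly q 0 = poly L 0" by simp
  also have "\<dots> = (\<Sum>i=0..M. poly q (x i) * poly (l i) 0)" unfolding L_def by (simp add: poly_sum)
  finally show ?thesis by (simp add: pl)
qed

lemma lag_sign:
  fixes x :: "nat \<Rightarrow> real"
  assumes mono: "\<And>i j. i < j \<Longrightarrow> j \<le> M \<Longrightarrow> x i < x j" and pos: "\<And>i. i \<le> M \<Longrightarrow> x i > 0"
    and i: "i \<le> M"
  shows "(-1)^i * (\<Prod>j\<in>{0..M}-{i}. (0 - x j) / (x i - x j)) > 0"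
proof -
  define f where "f j = (0 - x j) / (x i - x j)" for j
  have split: "{0..M}-{i} = {0..<i} \<union> {i<..M}" using i by auto
  have P: "(\<Prod>j\<in>{0..M}-{i}. f j) = (\<Prod>j\<in>{0..<i}. f j) * (\<Prod>j\<in>{i<..M}. f j)"
    unfolding split by (rule prod.union_disjoint) auto
  have neg: "f j < 0" if "j < i" for j
  proof -
    have "x j < x i" "x j > 0" using mono[OF that i] pos that i by auto
    thus ?thesis unfolding f_def by (simp add: divide_neg_pos)
  qed
  have ps: "f j > 0" if "i < j" "j \<le> M" for j
  proof -
    have "x i < x j" "x j > 0" using mono[OF that] pos that by auto
    thus ?thesis unfolding f_def by (simp add: divide_pos_neg)
  qed
  have "(\<Prod>j\<in>{0..<i}. f j) = (\<Prod>j\<in>{0..<i}. (-1) * (- f j))" by simp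
  also have "\<dots> = (-1)^i * (\<Prod>j\<in>{0..<i}. - f j)" by (subst prod.distrib) simp
  finally have P1: "(\<Prod>j\<in>{0..<i}. f j) = (-1)^i * (\<Prod>j\<in>{0..<i}. - f j)" .
  have p1: "(\<Prod>j\<in>{0..<i}. - f j) > 0" using neg by (intro prod_pos) auto
  have p2: "(\<Prod>j\<in>{i<..M}. f j) > 0" using ps by (intro prod_pos) auto
  have "(-1::real)^i * (-1)^i = 1" by (simp flip: power_mult_distrib)
  hence "(-1)^i * (\<Prod>j\<in>{0..M}-{i}. f j) = (\<Prod>j\<in>{0..<i}. - f j) * (\<Prod>j\<in>{i<..M}. f j)"
    unfolding P P1 by (metis mult.assoc mult_1)
  thus ?thesis using p1 p2 unfolding f_def by simp
qed

lemma cheb_opt: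
  fixes x :: "nat \<Rightarrow> real" and p q :: "real poly"
  assumes mono: "\<And>i j. i < j \<Longrightarrow> j \<le> M \<Longrightarrow> x i < x j" and pos: "\<And>i. i \<le> M \<Longrightarrow> x i > 0"
    and px: "\<And>i. i \<le> M \<Longrightarrow> poly p (x i) = (-1)^i" and dp: "degree p \<le> M"
    and dq: "degree q \<le> M" and qx: "\<And>i. i \<le> M \<Longrightarrow> \<bar>poly q (x i)\<bar> \<le> 1"
  shows "poly q 0 \<le> poly p 0"
proof -
  have inj: "inj_on x {0..M}"
  proof (rule inj_onI)
    fix a b assume "a \<in> {0..M}" "b \<in> {0..M}" "x a = x b"
    thus "a = b" using mono by (metis atLeastAtMost_iff linorder_neqE_nat less_irrefl)
  qed
  define w where "w i = (\<Prod>j\<in>{0..M}-{i}. (0 - x j) / (x i - x j))" for i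
  have ws: "(-1)^i * w i > 0" if "i \<le> M" for i unfolding w_def by (rule lag_sign[OF mono pos that])
  have "poly q 0 = (\<Sum>i=0..M. poly q (x i) * w i)" unfolding w_def by (rule lagrange0[OF inj dq])
  also have "\<dots> \<le> (\<Sum>i=0..M. (-1)^i * w i)"
  proof (intro sum_mono)
    fix i assume "i \<in> {0..M}"
    hence i: "i \<le> M" by simp
    have "\<bar>w i\<bar> = (-1)^i * w i"
    proof -
      have "\<bar>(-1::real)^i * w i\<bar> = \<bar>w i\<bar>" by (simp add: abs_mult)
      thus ?thesis using ws[OF i] by simp
    qed
    moreover have "poly q (x i) * w i \<le> \<bar>poly q (x i)\<bar> * \<bar>w i\<bar>" by (metis abs_ge_self abs_mult)
    moreover have "\<bar>poly q (x i)\<bar> * \<bar>w i\<bar> \<le> \<bar>w i\<bar>" using qx[OF i] by (simp add: mult_left_le_one_le)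
    ultimately show "poly q (x i) * w i \<le> (-1)^i * w i" by linarith
  qed
  also have "\<dots> = (\<Sum>i=0..M. poly p (x i) * w i)" by (intro sum.cong) (auto simp: px)
  also have "\<dots> = poly p 0" unfolding w_def by (rule lagrange0[OF inj dp, symmetric])
  finally show ?thesis .
qed

lemma backward:
  fixes \<mu>1 L1 \<mu>2 L2 :: real
  assumes o: "0 < \<mu>1" "\<mu>1 < L1" "L1 < \<mu>2" "\<mu>2 < L2" and eq: "L1 - \<mu>1 = L2 - \<mu>2"
  shows "\<exists>\<sigma> :: real poly. degree \<sigma> = 2
            \<and> poly \<sigma> ` ({\<mu>1..L1} \<union> {\<mu>2..L2}) \<subseteq> {-1..1}
            \<and> (\<forall>n\<ge>1. solves_max ({\<mu>1..L1} \<union> {\<mu>2..L2}) (2 * n) (pcompose (cheb_T n) \<sigma>))"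
proof -
  define c where "c = (L1 + \<mu>2) / 2"
  define h where "h = (\<mu>2 - L1) / 2"
  define R where "R = L2 - c"
  have h0: "h > 0" unfolding h_def using o by simp
  have Rh: "R > h" unfolding R_def h_def c_def using o by (simp add: field_simps)
  have cR1: "c - R = \<mu>1" unfolding R_def c_def using eq by (simp add: field_simps)
  have ch1: "c - h = L1" unfolding h_def c_def by (simp add: field_simps)
  have ch2: "c + h = \<mu>2" unfolding h_def c_def by (simp add: field_simps)
  have cR2: "c + R = L2" unfolding R_def by (simp add: field_simps)
  define A where "A = 2 / (R^2 - h^2)"
  have RR: "R^2 - h^2 > 0" using h0 Rh by (simp add: power_strict_mono)
  have A0: "A > 0" unfolding A_def using RR by simp
  have A2: "2 / A = R^2 - h^2" unfolding A_def using RR by simp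
  define \<sigma> where "\<sigma> = [:A * (c^2 - h^2) - 1, -2 * A * c, A:]"
  have pv: "\<And>x. poly \<sigma> x = A * ((x - c)^2 - h^2) - 1"
    unfolding \<sigma>_def by (simp add: power2_eq_square algebra_simps)
  have deg: "degree \<sigma> = 2" unfolding \<sigma>_def using A0 by simp
  define S where "S = {\<mu>1..L1} \<union> {\<mu>2..L2}"
  have fv: "-1 \<le> poly \<sigma> x \<and> poly \<sigma> x \<le> 1" if x: "x \<in> S" for x
  proof -
    have "h \<le> \<bar>x - c\<bar> \<and> \<bar>x - c\<bar> \<le> R"
      using x cR1 ch1 ch2 cR2 h0 unfolding S_def by (auto simp: abs_if)
    hence "h^2 \<le> (x - c)^2 \<and> (x - c)^2 \<le> R^2" using h0
      by (metis abs_le_square_iff abs_of_pos order.trans power2_abs abs_ge_zero power_mono)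
    hence "0 \<le> A * ((x - c)^2 - h^2) \<and> A * ((x - c)^2 - h^2) \<le> A * (R^2 - h^2)"
      using A0 by (simp add: mult_left_mono)
    moreover have "A * (R^2 - h^2) = 2" using A2 A0 by (simp add: field_simps)
    ultimately show ?thesis by (simp add: pv)
  qed
  have img: "poly \<sigma> ` S \<subseteq> {-1..1}" using fv by auto
  have opt: "solves_max S (2 * n) (pcompose (cheb_T n) \<sigma>)" if n1: "n \<ge> 1" for n
  proof -
    define p where "p = pcompose (cheb_T n) \<sigma>"
    have dp: "degree p \<le> 2 * n" unfolding p_def degree_pcompose deg using cheb_deg[of n] by simp
    have pb: "\<forall>x\<in>S. \<bar>poly p x\<bar> \<le> 1" unfolding p_def using fv cheb_bound by (simp add: poly_pcompose)
    have cnn: "0 \<le> h^2 + (1 + cos t) / A" for t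
    proof -
      have "0 \<le> (1 + cos t) / A" by (rule divide_nonneg_pos) (use A0 cos_ge_minus_one[of t] in linarith)+
      thus ?thesis by simp
    qed
    define s where "s i = sqrt (h^2 + (1 + cos (real i * pi / real n)) / A)" for i
    define x where "x i = (if i \<le> n then c - s i else c + s i)" for i
    have sb: "h \<le> s i \<and> s i \<le> R" for i
    proof -
      have "0 \<le> (1 + cos (real i * pi / real n)) / A" by (rule divide_nonneg_pos) (use A0 cos_ge_minus_one[of "real i * pi / real n"] in linarith)+
      moreover have "(1 + cos (real i * pi / real n)) / A \<le> 2 / A" using A0 cos_le_one[of "real i * pi / real n"] by (simp add: divide_right_mono)
      ultimately have "h^2 \<le> h^2 + (1 + cos (real i * pi / real n)) / A"
          "h^2 + (1 + cos (real i * pi / real n)) / A \<le> R^2" using A2 by auto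
      hence "sqrt (h^2) \<le> s i" "s i \<le> sqrt (R^2)" unfolding s_def using real_sqrt_le_mono by blast+
      thus ?thesis using h0 Rh by simp
    qed
    have sv: "poly \<sigma> (x i) = cos (real i * pi / real n)" for i
    proof -
      have "(x i - c)^2 = (s i)^2" unfolding x_def by simp
      also have "\<dots> = h^2 + (1 + cos (real i * pi / real n)) / A" unfolding s_def using cnn[of "real i * pi / real n"] by simp
      finally show ?thesis unfolding pv using A0 by (simp add: field_simps)
    qed
    have px: "poly p (x i) = (-1)^i" for i
    proof -
      have "poly p (x i) = cos (real n * (real i * pi / real n))" unfolding p_def by (simp add: poly_pcompose sv cheb_cos)
      also have "real n * (real i * pi / real n) = real i * pi" using n1 by simp
      finally show ?thesis by simp
    qed
    have xS: "x i \<in> S" for i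
      using sb[of i] cR1 ch1 ch2 cR2 unfolding x_def S_def by auto
    have xpos: "x i > 0" for i using xS[of i] o unfolding S_def by auto
    have mono: "x i < x j" if ij: "i < j" "j \<le> 2 * n" for i j
    proof -
      have np: "real n > 0" using n1 by simp
      consider "j \<le> n" | "i \<le> n" "n < j" | "n < i" using ij by linarith
      then show ?thesis
      proof cases
        case 1
        have "cos (real j * pi / real n) < cos (real i * pi / real n)"
        proof (rule cos_monotone_0_pi)
          show "0 \<le> real i * pi / real n" using np by simp
          show "real i * pi / real n < real j * pi / real n" using ij np by (simp add: divide_strict_right_mono)
          show "real j * pi / real n \<le> pi" using 1 np by (simp add: field_simps)
        qed
        hence "s j < s i" unfolding s_def using A0 by (simp add: divide_strict_right_mono)
        thus ?thesis using 1 ij unfolding x_def by simp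
      next
        case 2
        then show ?thesis using sb[of i] sb[of j] h0 unfolding x_def by simp
      next
        case 3
        have e: "cos (real k * pi / real n) = cos ((2 * real n - real k) * pi / real n)" for k
        proof -
          have "(2 * real n - real k) * pi / real n = 2 * pi - real k * pi / real n" using np by (simp add: field_simps)
          thus ?thesis by simp
        qed
        have "cos ((2 * real n - real i) * pi / real n) < cos ((2 * real n - real j) * pi / real n)"
        proof (rule cos_monotone_0_pi)
          show "0 \<le> (2 * real n - real j) * pi / real n" using ij np by simp
          show "(2 * real n - real j) * pi / real n < (2 * real n - real i) * pi / real n"
            using ij np by (simp add: divide_strict_right_mono)
          show "(2 * real n - real i) * pi / real n \<le> pi" using 3 np by (simp add: field_simps)
        qed
        hence "cos (real i * pi / real n) < cos (real j * pi / real n)" using e by simp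
        hence "s i < s j" unfolding s_def using A0 by (simp add: divide_strict_right_mono)
        thus ?thesis using 3 ij unfolding x_def by simp
      qed
    qed
    have "feasible S (2 * n) p" unfolding feasible_def using dp pb by simp
    moreover have "poly q 0 \<le> poly p 0" if q: "feasible S (2 * n) q" for q
    proof (rule cheb_opt[where M = "2 * n" and x = x])
      show "\<And>i j. i < j \<Longrightarrow> j \<le> 2 * n \<Longrightarrow> x i < x j" using mono by blast
      show "\<And>i. i \<le> 2 * n \<Longrightarrow> 0 < x i" using xpos by blast
      show "\<And>i. i \<le> 2 * n \<Longrightarrow> poly p (x i) = (-1)^i" using px by blast
      show "degree p \<le> 2 * n" by (rule dp)
      show "degree q \<le> 2 * n" using q unfolding feasible_def by simp
      show "\<And>i. i \<le> 2 * n \<Longrightarrow> \<bar>poly q (x i)\<bar> \<le> 1" using q xS unfolding feasible_def by blast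
    qed
    ultimately show ?thesis unfolding solves_max_def p_def by blast
  qed
  show ?thesis using deg img opt unfolding S_def by blast
qed

theorem mainTheorem13:
  fixes \<mu>1 L1 \<mu>2 L2 :: real
  assumes "0 < \<mu>1" "\<mu>1 < L1" "L1 < \<mu>2" "\<mu>2 < L2"
  shows "(\<exists>\<sigma> :: real poly. degree \<sigma> = 2
            \<and> poly \<sigma> ` ({\<mu>1..L1} \<union> {\<mu>2..L2}) \<subseteq> {-1..1}
            \<and> (\<forall>n\<ge>1. solves_max ({\<mu>1..L1} \<union> {\<mu>2..L2}) (2 * n) (pcompose (cheb_T n) \<sigma>)))
         \<longleftrightarrow> L1 - \<mu>1 = L2 - \<mu>2"
  using forward[OF assms] backward[OF assms] by blast

end
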